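(* Let $(u,\rho)$ be a smooth solution on $[0,T)$ of the CH2 system on $S_1=\mathbb{R}/2\pi\mathbb{Z}$ (coordinate $\theta$) $$\partial_t m+u\,\partial_\theta m+2m\,\partial_\theta u=-\rho\,\partial_\theta\rho,\qquad m=u-\tfrac14\partial_{\theta\theta}u,\qquad \partial_t\rho+\partial_\theta(\rho u)=0 .$$ Let $N=S_1\times\mathbb{R}_{>0}\times S_1\times S_1$ with coordinates $(\theta,r,y,z)$ (the second circle being $\mathbb{R}/\mathbb{Z}$ in $y$) and metric $$h=r^2(\mathrm{d}\theta)^2+(\mathrm{d}r)^2+r^2(\mathrm{d}y)^2+r^{-10}(\mathrm{d}z)^2 ,$$ and define $$v(t,\theta,r,y,z)=u(t,\theta)\,\partial_\theta+\rho(t,\theta)\,\partial_y+\tfrac{r}{2}\,\partial_\theta u(t,\theta)\,\partial_r .$$ Then there exists a pressure $p$ on $[0,T)\times N$ such that $\partial_t v+\nabla_v v=-\nabla p$ and $\operatorname{div}_h v=0$, i.e. $v$ solves the incompressible Euler equation on $(N,h)$.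
   Context: $\nabla$ is the Levi-Civita connection of $h$, $\nabla p$ the $h$-gradient, $\operatorname{div}_h$ the divergence with respect to the Riemannian volume form of $h$. *)

theory Defs
  imports "HOL-Analysis.Analysis"
begin

text \<open>Coordinate calculus on subsets of R^n (real^'n).  Partial derivatives are
  taken along coordinate lines, relative to the set S (one-sided at boundary points).\<close>

definition has_partial :: "(real^'n) set \<Rightarrow> 'n \<Rightarrow> (real^'n \<Rightarrow> real) \<Rightarrow> real^'n \<Rightarrow> bool" where
  "has_partial S i f x \<longleftrightarrow>
     (\<exists>d. ((\<lambda>s. f (x + s *\<^sub>R axis i 1)) has_real_derivative d)
            (at 0 within {s. x + s *\<^sub>R axis i 1 \<in> S}))"

definition partial :: "(real^'n) set \<Rightarrow> 'n \<Rightarrow> (real^'n \<Rightarrow> real) \<Rightarrow> real^'n \<Rightarrow> real" where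
  "partial S i f x =
     (THE d. ((\<lambda>s. f (x + s *\<^sub>R axis i 1)) has_real_derivative d)
            (at 0 within {s. x + s *\<^sub>R axis i 1 \<in> S}))"

fun Ck :: "nat \<Rightarrow> (real^'n) set \<Rightarrow> (real^'n \<Rightarrow> real) \<Rightarrow> bool" where
  "Ck 0 S f = continuous_on S f"
| "Ck (Suc k) S f = (continuous_on S f \<and> (\<forall>i. \<forall>x\<in>S. has_partial S i f x)
                      \<and> (\<forall>i. Ck k S (partial S i f)))"

definition smooth_on :: "(real^'n) set \<Rightarrow> (real^'n \<Rightarrow> real) \<Rightarrow> bool" where
  "smooth_on S f \<longleftrightarrow> (\<forall>k. Ck k S f)"

text \<open>Riemannian geometry in a single coordinate chart, for a metric given by its
  coordinate matrix g(x).\<close>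

definition christoffel :: "(real^'n) set \<Rightarrow> (real^'n \<Rightarrow> real^'n^'n) \<Rightarrow> real^'n \<Rightarrow> 'n \<Rightarrow> 'n \<Rightarrow> 'n \<Rightarrow> real" where
  "christoffel U g x k i j =
     (1/2) * (\<Sum>l\<in>UNIV. matrix_inv (g x) $ k $ l *
        (partial U i (\<lambda>y. g y $ j $ l) x + partial U j (\<lambda>y. g y $ i $ l) x
         - partial U l (\<lambda>y. g y $ i $ j) x))"

definition cov_deriv :: "(real^'n) set \<Rightarrow> (real^'n \<Rightarrow> real^'n^'n) \<Rightarrow> (real^'n \<Rightarrow> real^'n)
                         \<Rightarrow> (real^'n \<Rightarrow> real^'n) \<Rightarrow> real^'n \<Rightarrow> real^'n" where
  "cov_deriv U g V W x = (\<chi> k. (\<Sum>i\<in>UNIV. V x $ i * partial U i (\<lambda>y. W y $ k) x)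
      + (\<Sum>i\<in>UNIV. \<Sum>j\<in>UNIV. christoffel U g x k i j * V x $ i * W x $ j))"

definition grad :: "(real^'n) set \<Rightarrow> (real^'n \<Rightarrow> real^'n^'n) \<Rightarrow> (real^'n \<Rightarrow> real) \<Rightarrow> real^'n \<Rightarrow> real^'n" where
  "grad U g p x = matrix_inv (g x) *v (\<chi> l. partial U l p x)"

definition divg :: "(real^'n) set \<Rightarrow> (real^'n \<Rightarrow> real^'n^'n) \<Rightarrow> (real^'n \<Rightarrow> real^'n) \<Rightarrow> real^'n \<Rightarrow> real" where
  "divg U g V x = (1 / sqrt (det (g x))) *
      (\<Sum>i\<in>UNIV. partial U i (\<lambda>y. sqrt (det (g y)) * V y $ i) x)"

text \<open>The CH2 system.  (t,theta) is packed as a point of real^2: x$1 = t, x$2 = theta.\<close>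

definition CH2_dom :: "real \<Rightarrow> (real^2) set" where
  "CH2_dom T = {x. 0 \<le> x$1 \<and> x$1 < T}"

definition CH2_solution :: "real \<Rightarrow> (real \<Rightarrow> real \<Rightarrow> real) \<Rightarrow> (real \<Rightarrow> real \<Rightarrow> real) \<Rightarrow> bool" where
  "CH2_solution T u \<rho> \<longleftrightarrow>
    (let S = CH2_dom T; U = (\<lambda>x::real^2. u (x$1) (x$2)); R = (\<lambda>x::real^2. \<rho> (x$1) (x$2));
         M = (\<lambda>x. U x - 1/4 * partial S 2 (partial S 2 U) x) in
     smooth_on S U \<and> smooth_on S R \<and>
     (\<forall>t \<theta>. 0 \<le> t \<and> t < T \<longrightarrow> u t (\<theta> + 2*pi) = u t \<theta> \<and> \<rho> t (\<theta> + 2*pi) = \<rho> t \<theta>) \<and>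
     (\<forall>x\<in>S. partial S 1 M x + U x * partial S 2 M x + 2 * M x * partial S 2 U x
              = - R x * partial S 2 R x) \<and>
     (\<forall>x\<in>S. partial S 1 R x + partial S 2 (\<lambda>y. R y * U y) x = 0))"

text \<open>The manifold N in coordinates x = (theta, r, y, z) = (x$1, x$2, x$3, x$4),
  r > 0, with periodicities 2pi in theta, 1 in y, 2pi in z.\<close>

definition N_dom :: "(real^4) set" where
  "N_dom = {x. 0 < x$2}"

definition h_metric :: "real^4 \<Rightarrow> real^4^4" where
  "h_metric x = (\<chi> i j. if i = j then
       (if i = 1 then (x$2)^2 else if i = 2 then 1 else if i = 3 then (x$2)^2
        else inverse ((x$2)^10)) else 0)"

definition N_periodic :: "(real^4 \<Rightarrow> real) \<Rightarrow> bool" where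
  "N_periodic f \<longleftrightarrow> (\<forall>x\<in>N_dom. f (x + (2*pi) *\<^sub>R axis 1 1) = f x \<and> f (x + axis 3 1) = f x
                          \<and> f (x + (2*pi) *\<^sub>R axis 4 1) = f x)"

definition CH2_lift :: "real \<Rightarrow> (real \<Rightarrow> real \<Rightarrow> real) \<Rightarrow> (real \<Rightarrow> real \<Rightarrow> real)
                         \<Rightarrow> real \<Rightarrow> real^4 \<Rightarrow> real^4" where
  "CH2_lift T u \<rho> t x = (\<chi> k.
      if k = 1 then u t (x$1)
      else if k = 2 then x$2 / 2 * partial (CH2_dom T) 2 (\<lambda>w::real^2. u (w$1) (w$2)) (vector [t, x$1])
      else if k = 3 then \<rho> t (x$1)
      else 0)"

end

theory Submission
  imports Defs "HOL-Analysis.Analysis"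
begin

lemma line_nth [simp]: "(x + s *\<^sub>R axis i 1) $ j = x $ j + (if j = i then s else 0)"
  by (simp add: axis_def)


lemma partial_unique:
  assumes "((\<lambda>s. f (x + s *\<^sub>R axis i 1)) has_real_derivative d) (at 0 within {s. x + s *\<^sub>R axis i 1 \<in> S})"
    and "\<not> trivial_limit (at (0::real) within {s. x + s *\<^sub>R axis i 1 \<in> S})"
  shows "partial S i f x = d" "has_partial S i f x"
proof -
  show "partial S i f x = d"
    unfolding partial_def
  proof (rule the_equality)
    fix d' assume "((\<lambda>s. f (x + s *\<^sub>R axis i 1)) has_real_derivative d') (at 0 within {s. x + s *\<^sub>R axis i 1 \<in> S})"
    with assms show "d' = d"
      unfolding has_field_derivative_iff using tendsto_unique by blast
  qed (rule assms(1))
  show "has_partial S i f x" using assms(1) unfolding has_partial_def by blast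
qed

lemma deriv_cong_set:
  assumes "0 \<in> A" "\<And>s. s \<in> A \<Longrightarrow> F s = G s"
  shows "(F has_real_derivative d) (at 0 within A) \<longleftrightarrow> (G has_real_derivative d) (at 0 within A)"
  using assms unfolding has_field_derivative_def
  by (metis has_derivative_transform)

lemma partial_cong_gen:
  assumes "{s. x + s *\<^sub>R axis i 1 \<in> S} = {s. y + s *\<^sub>R axis i 1 \<in> S}" "x \<in> S"
    "\<And>s. x + s *\<^sub>R axis i 1 \<in> S \<Longrightarrow> f (x + s *\<^sub>R axis i 1) = g (y + s *\<^sub>R axis i 1)"
  shows "partial S i f x = partial S i g y" "has_partial S i f x = has_partial S i g y"
proof -
  have 0: "0 \<in> {s. x + s *\<^sub>R axis i 1 \<in> S}" using assms(2) by simp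
  have e: "((\<lambda>s. f (x + s *\<^sub>R axis i 1)) has_real_derivative d) (at 0 within {s. x + s *\<^sub>R axis i 1 \<in> S})
     \<longleftrightarrow> ((\<lambda>s. g (y + s *\<^sub>R axis i 1)) has_real_derivative d) (at 0 within {s. y + s *\<^sub>R axis i 1 \<in> S})" for d
  proof -
    have r: "((\<lambda>s. f (x + s *\<^sub>R axis i 1)) has_real_derivative d) (at 0 within {s. x + s *\<^sub>R axis i 1 \<in> S})
     \<longleftrightarrow> ((\<lambda>s. g (y + s *\<^sub>R axis i 1)) has_real_derivative d) (at 0 within {s. x + s *\<^sub>R axis i 1 \<in> S})"
      by (rule deriv_cong_set[OF 0]) (use assms(3) in simp)
    show ?thesis using r by (simp only: assms(1)[symmetric])
  qed
  show "partial S i f x = partial S i g y" unfolding partial_def e ..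
  show "has_partial S i f x = has_partial S i g y" unfolding has_partial_def e ..
qed

lemma partial_cong:
  assumes "x \<in> S" "\<And>y. y \<in> S \<Longrightarrow> f y = g y"
  shows "partial S i f x = partial S i g x" "has_partial S i f x = has_partial S i g x"
  by (rule partial_cong_gen[OF refl assms(1) assms(2)], assumption)+

lemma Ck_cong: "(\<And>y. y \<in> S \<Longrightarrow> f y = g y) \<Longrightarrow> Ck k S f = Ck k S g"
proof (induction k arbitrary: f g)
  case 0
  have "continuous_on S f = continuous_on S g" by (rule continuous_on_cong[OF refl]) (rule 0)
  then show ?case by (simp only: Ck.simps(1))
next
  case (Suc k)
  have c: "continuous_on S f = continuous_on S g" by (rule continuous_on_cong[OF refl]) (rule Suc.prems)
  have h: "(\<forall>i. \<forall>x\<in>S. has_partial S i f x) = (\<forall>i. \<forall>x\<in>S. has_partial S i g x)"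
  proof -
    have hp: "has_partial S i f x = has_partial S i g x" if "x \<in> S" for i x
      by (rule partial_cong(2)[OF that Suc.prems])
    show ?thesis by (simp add: hp cong: ball_cong)
  qed
  have p: "Ck k S (partial S i f) = Ck k S (partial S i g)" for i
    by (rule Suc.IH) (rule partial_cong(1)[OF _ Suc.prems])
  show ?case by (simp only: Ck.simps c h p)
qed

lemma smooth_cont: "smooth_on S f \<Longrightarrow> continuous_on S f"
  unfolding smooth_on_def using Ck.simps(1) by blast
lemma smooth_has: "smooth_on S f \<Longrightarrow> x \<in> S \<Longrightarrow> has_partial S i f x"
  unfolding smooth_on_def using Ck.simps(2) by blast
lemma smooth_partial: "smooth_on S f \<Longrightarrow> smooth_on S (partial S i f)"
  unfolding smooth_on_def using Ck.simps(2) by blast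

lemma vec2_line2: "vector[t,\<theta>] + s *\<^sub>R axis 2 1 = (vector[t, \<theta>+s] :: real^2)"
  by (simp add: vec_eq_iff forall_2 axis_def)
lemma vec2_line1: "vector[t,\<theta>] + s *\<^sub>R axis 1 1 = (vector[t+s, \<theta>] :: real^2)"
  by (simp add: vec_eq_iff forall_2 axis_def)
lemma mem_dom: "(vector[t,\<theta>] :: real^2) \<in> CH2_dom T \<longleftrightarrow> 0 \<le> t \<and> t < T"
  by (simp add: CH2_dom_def)
lemma vec2_eta: "(x::real^2) = vector[x$1, x$2]"
  by (simp add: vec_eq_iff forall_2)

lemma P2:
  assumes "0 \<le> t" "t < T" "((\<lambda>\<tau>. F (vector[t,\<tau>])) has_real_derivative d) (at \<theta>)"
  shows "partial (CH2_dom T) 2 F (vector[t,\<theta>]) = d" "has_partial (CH2_dom T) 2 F (vector[t,\<theta>])"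
proof -
  have A: "{s. vector[t,\<theta>] + s *\<^sub>R axis 2 1 \<in> CH2_dom T} = UNIV"
    using assms by (simp add: vec2_line2 mem_dom)
  have "((\<lambda>s. F (vector[t, s + \<theta>])) has_real_derivative d) (at 0)"
    using assms(3) DERIV_shift[of "\<lambda>\<tau>. F (vector[t,\<tau>])" d 0 \<theta>] by simp
  then have D: "((\<lambda>s. F (vector[t,\<theta>] + s *\<^sub>R axis 2 1)) has_real_derivative d)
       (at 0 within {s. vector[t,\<theta>] + s *\<^sub>R axis 2 1 \<in> CH2_dom T})"
    unfolding A by (simp add: vec2_line2 add.commute)
  have N: "\<not> trivial_limit (at (0::real) within {s. vector[t,\<theta>] + s *\<^sub>R axis 2 1 \<in> CH2_dom T})"
    unfolding A by simp
  show "partial (CH2_dom T) 2 F (vector[t,\<theta>]) = d" "has_partial (CH2_dom T) 2 F (vector[t,\<theta>])"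
    using partial_unique[OF D N] by auto
qed

lemma L2:
  assumes "0 \<le> t" "t < T" "has_partial (CH2_dom T) 2 F (vector[t,\<theta>])"
  shows "((\<lambda>\<tau>. F (vector[t,\<tau>])) has_real_derivative partial (CH2_dom T) 2 F (vector[t,\<theta>])) (at \<theta>)"
proof -
  have A: "{s. vector[t,\<theta>] + s *\<^sub>R axis 2 1 \<in> CH2_dom T} = UNIV"
    using assms by (simp add: vec2_line2 mem_dom)
  obtain d where D: "((\<lambda>s. F (vector[t,\<theta>] + s *\<^sub>R axis 2 1)) has_real_derivative d)
       (at 0 within {s. vector[t,\<theta>] + s *\<^sub>R axis 2 1 \<in> CH2_dom T})"
    using assms(3) unfolding has_partial_def by blast
  have N: "\<not> trivial_limit (at (0::real) within {s. vector[t,\<theta>] + s *\<^sub>R axis 2 1 \<in> CH2_dom T})"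
    unfolding A by simp
  have pd: "partial (CH2_dom T) 2 F (vector[t,\<theta>]) = d" using partial_unique[OF D N] by auto
  have "((\<lambda>s. F (vector[t, s + \<theta>])) has_real_derivative d) (at 0)"
    using D unfolding A by (simp add: vec2_line2 add.commute)
  then show ?thesis
    using DERIV_shift[of "\<lambda>\<tau>. F (vector[t,\<tau>])" d 0 \<theta>] pd by simp
qed

lemma dom_line1: "{s. vector[t,\<theta>] + s *\<^sub>R axis 1 1 \<in> CH2_dom T} = {s. 0 \<le> t + s \<and> t + s < T}"
  by (simp add: vec2_line1 mem_dom)

lemma dom_line1_nontriv:
  assumes "0 \<le> t" "t < T"
  shows "\<not> trivial_limit (at (0::real) within {s. vector[t,\<theta>] + s *\<^sub>R axis 1 1 \<in> CH2_dom T})"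
proof -
  have "{0<..<T-t} \<subseteq> {s. vector[t,\<theta>] + s *\<^sub>R axis 1 1 \<in> CH2_dom T}"
    unfolding dom_line1 using assms by auto
  moreover have "(0::real) islimpt {0<..<T-t}" using assms by (intro islimpt_greaterThanLessThan1) simp
  ultimately show ?thesis unfolding trivial_limit_within using islimpt_subset by blast
qed

lemma P1:
  assumes "0 \<le> t" "t < T" "((\<lambda>s. F (vector[s,\<theta>])) has_real_derivative d) (at t within {0..<T})"
  shows "partial (CH2_dom T) 1 F (vector[t,\<theta>]) = d" "has_partial (CH2_dom T) 1 F (vector[t,\<theta>])"
proof -
  let ?A = "{s. vector[t,\<theta>] + s *\<^sub>R axis 1 1 \<in> CH2_dom T}"
  have img: "(+) t ` ?A = {0..<T}"
    unfolding dom_line1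
  proof (rule set_eqI, rule iffI)
    fix y assume "y \<in> {0..<T}" then show "y \<in> (+) t ` {s. 0 \<le> t + s \<and> t + s < T}"
      by (intro image_eqI[of _ _ "y - t"]) auto
  qed auto
  have "((\<lambda>s. F (vector[s,\<theta>])) \<circ> (+) t has_real_derivative d) (at 0 within ?A)"
    by (rule DERIV_at_within_shift_lemma) (use assms(3) img in simp)
  then have D: "((\<lambda>s. F (vector[t,\<theta>] + s *\<^sub>R axis 1 1)) has_real_derivative d) (at 0 within ?A)"
    by (simp add: vec2_line1 o_def)
  show "partial (CH2_dom T) 1 F (vector[t,\<theta>]) = d" "has_partial (CH2_dom T) 1 F (vector[t,\<theta>])"
    using partial_unique[OF D dom_line1_nontriv[OF assms(1,2)]] by auto
qed

lemma L1:
  assumes "0 \<le> t" "t < T" "has_partial (CH2_dom T) 1 F (vector[t,\<theta>])"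
  shows "((\<lambda>s. F (vector[s,\<theta>])) has_real_derivative partial (CH2_dom T) 1 F (vector[t,\<theta>])) (at t within {0..<T})"
proof -
  let ?A = "{s. vector[t,\<theta>] + s *\<^sub>R axis 1 1 \<in> CH2_dom T}"
  obtain d where D: "((\<lambda>s. F (vector[t,\<theta>] + s *\<^sub>R axis 1 1)) has_real_derivative d) (at 0 within ?A)"
    using assms(3) unfolding has_partial_def by blast
  have pd: "partial (CH2_dom T) 1 F (vector[t,\<theta>]) = d"
    using partial_unique[OF D dom_line1_nontriv[OF assms(1,2)]] by auto
  have img: "(+) (-t) ` {0..<T} = ?A"
    unfolding dom_line1
  proof (rule set_eqI, rule iffI)
    fix y assume "y \<in> {s. 0 \<le> t + s \<and> t + s < T}" then show "y \<in> (+) (-t) ` {0..<T}"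
      by (intro image_eqI[of _ _ "y + t"]) auto
  qed auto
  have "((\<lambda>s. F (vector[t,\<theta>] + s *\<^sub>R axis 1 1)) \<circ> (+) (-t) has_real_derivative d) (at t within {0..<T})"
    by (rule DERIV_at_within_shift_lemma) (use D img in simp)
  then show ?thesis using pd by (simp add: vec2_line1 o_def)
qed

lemma L1at:
  assumes "0 < t" "t < T" "has_partial (CH2_dom T) 1 F (vector[t,\<theta>])"
  shows "((\<lambda>s. F (vector[s,\<theta>])) has_real_derivative partial (CH2_dom T) 1 F (vector[t,\<theta>])) (at t)"
proof -
  have "t \<in> interior {0..<T}" using assms by simp
  then show ?thesis using L1[of t T F \<theta>] assms at_within_interior by fastforce
qed

lemma shiftD: "DERIV g a :> d \<Longrightarrow> ((\<lambda>s. g (a + s)) has_real_derivative d) (at 0)"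
  using DERIV_shift[of g d 0 a] by (simp add: add.commute)

lemma PN:
  assumes "x \<in> N_dom" "((\<lambda>s. F (x + s *\<^sub>R axis i 1)) has_real_derivative d) (at 0)"
  shows "partial N_dom i F x = d" "has_partial N_dom i F x"
proof -
  let ?A = "{s. x + s *\<^sub>R axis i 1 \<in> N_dom}"
  have A: "?A = {s. 0 < x$2 + (if 2 = i then s else 0)}" by (simp add: N_dom_def axis_def)
  have op: "open ?A"
  proof (cases "i = 2")
    case True
    then have "?A = {-(x$2)<..}" unfolding A by auto
    then show ?thesis by simp
  next
    case False
    then have "?A = UNIV" using assms(1) unfolding A by (auto simp: N_dom_def)
    then show ?thesis by simp
  qed
  have z: "0 \<in> ?A" using assms(1) by simp
  have w: "at (0::real) within ?A = at 0" by (rule at_within_open[OF z op])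
  have D: "((\<lambda>s. F (x + s *\<^sub>R axis i 1)) has_real_derivative d) (at 0 within ?A)"
    unfolding w by (rule assms(2))
  have N: "\<not> trivial_limit (at (0::real) within ?A)" unfolding w by simp
  show "partial N_dom i F x = d" "has_partial N_dom i F x" using partial_unique[OF D N] by auto
qed

lemma PN_sep:
  assumes x: "x \<in> N_dom" and F: "\<And>y. y \<in> N_dom \<Longrightarrow> F y = q (y$2) * g (y$1)"
    and g: "DERIV g (x$1) :> g'" and q: "DERIV q (x$2) :> q'"
  shows "partial N_dom i F x = (if i = 1 then q (x$2) * g' else if i = 2 then q' * g (x$1) else 0)"
    "has_partial N_dom i F x"
proof -
  let ?G = "\<lambda>y. q (y$2) * g (y$1)"
  have c1: "partial N_dom i F x = partial N_dom i ?G x" and c2: "has_partial N_dom i F x = has_partial N_dom i ?G x"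
    using partial_cong[OF x F] by auto
  have D: "((\<lambda>s. ?G (x + s *\<^sub>R axis i 1)) has_real_derivative
      (if i = 1 then q (x$2) * g' else if i = 2 then q' * g (x$1) else 0)) (at 0)"
  proof (cases "i = 1")
    case True
    then show ?thesis using DERIV_cmult[OF shiftD[OF g], of "q (x$2)"] by (simp add: axis_def)
  next
    case False
    note F1 = this
    show ?thesis
    proof (cases "i = 2")
      case True
      then show ?thesis using DERIV_cmult_right[OF shiftD[OF q], of "g (x$1)"] by (simp add: axis_def)
    next
      case False
      then show ?thesis using F1 by (simp add: axis_def)
    qed
  qed
  show "partial N_dom i F x = (if i = 1 then q (x$2) * g' else if i = 2 then q' * g (x$1) else 0)"
    "has_partial N_dom i F x" using PN[OF x D] c1 c2 by auto
qed

subsection \<open>One-variable smoothness\<close>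

fun C1k :: "nat \<Rightarrow> (real \<Rightarrow> real) \<Rightarrow> bool" where
  "C1k 0 a = continuous_on UNIV a"
| "C1k (Suc k) a = ((\<forall>\<theta>. a differentiable (at \<theta>)) \<and> C1k k (deriv a))"

definition smooth1 :: "(real \<Rightarrow> real) \<Rightarrow> bool" where
  "smooth1 a \<longleftrightarrow> (\<forall>k. C1k k a)"

lemma diff_cont: "(\<forall>\<theta>. (a::real\<Rightarrow>real) differentiable (at \<theta>)) \<Longrightarrow> continuous_on UNIV a"
  by (meson continuous_at_imp_continuous_on differentiable_imp_continuous_within)

lemma C1k_mono: "C1k (Suc k) a \<Longrightarrow> C1k k a"
proof (induction k arbitrary: a)
  case 0 then show ?case using diff_cont by simp
next
  case (Suc k) then show ?case by simp
qed

lemma C1k_cont: "C1k k a \<Longrightarrow> continuous_on UNIV a"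
  by (cases k) (simp_all add: diff_cont)

lemma dd: "(a::real\<Rightarrow>real) differentiable (at \<theta>) \<Longrightarrow> DERIV a \<theta> :> deriv a \<theta>"
  using DERIV_deriv_iff_real_differentiable by blast

lemma C1k_const: "C1k k (\<lambda>_. c)"
proof (induction k arbitrary: c)
  case 0 then show ?case by simp
next
  case (Suc k)
  have "deriv (\<lambda>_. c) = (\<lambda>_. 0)" by (rule ext, rule DERIV_imp_deriv) simp
  then show ?case using Suc by simp
qed

lemma C1k_add: "C1k k a \<Longrightarrow> C1k k b \<Longrightarrow> C1k k (\<lambda>\<theta>. a \<theta> + b \<theta>)"
proof (induction k arbitrary: a b)
  case 0 then show ?case by (simp add: continuous_on_add)
next
  case (Suc k)
  have "deriv (\<lambda>\<theta>. a \<theta> + b \<theta>) = (\<lambda>\<theta>. deriv a \<theta> + deriv b \<theta>)"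
    using Suc.prems by (intro ext DERIV_imp_deriv DERIV_add dd) auto
  then show ?case using Suc by auto
qed

lemma C1k_mult: "C1k k a \<Longrightarrow> C1k k b \<Longrightarrow> C1k k (\<lambda>\<theta>. a \<theta> * b \<theta>)"
proof (induction k arbitrary: a b)
  case 0 then show ?case by (simp add: continuous_on_mult)
next
  case (Suc k)
  have "deriv (\<lambda>\<theta>. a \<theta> * b \<theta>) = (\<lambda>\<theta>. deriv a \<theta> * b \<theta> + a \<theta> * deriv b \<theta>)"
    using Suc.prems by (intro ext DERIV_imp_deriv) (auto intro!: derivative_eq_intros dd)
  moreover have "C1k k (\<lambda>\<theta>. deriv a \<theta> * b \<theta> + a \<theta> * deriv b \<theta>)"
  proof (rule C1k_add)
    show "C1k k (\<lambda>\<theta>. deriv a \<theta> * b \<theta>)" by (rule Suc.IH) (use Suc.prems C1k_mono in auto)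
    show "C1k k (\<lambda>\<theta>. a \<theta> * deriv b \<theta>)" by (rule Suc.IH) (use Suc.prems C1k_mono in auto)
  qed
  ultimately show ?case using Suc.prems by auto
qed

lemma smooth1_const: "smooth1 (\<lambda>_. c)" unfolding smooth1_def using C1k_const by blast
lemma smooth1_add: "smooth1 a \<Longrightarrow> smooth1 b \<Longrightarrow> smooth1 (\<lambda>\<theta>. a \<theta> + b \<theta>)"
  unfolding smooth1_def using C1k_add by blast
lemma smooth1_mult: "smooth1 a \<Longrightarrow> smooth1 b \<Longrightarrow> smooth1 (\<lambda>\<theta>. a \<theta> * b \<theta>)"
  unfolding smooth1_def using C1k_mult by blast

lemma smooth1_slice:
  assumes "smooth_on (CH2_dom T) G" "0 \<le> t" "t < T"
  shows "smooth1 (\<lambda>\<theta>. G (vector[t,\<theta>]))"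
proof -
  have "\<forall>G. smooth_on (CH2_dom T) G \<longrightarrow> C1k k (\<lambda>\<theta>. G (vector[t,\<theta>]))" for k
  proof (induction k)
    case 0
    show ?case
    proof (intro allI impI)
      fix G :: "real^2 \<Rightarrow> real" assume G: "smooth_on (CH2_dom T) G"
      have "\<forall>\<theta>. (\<lambda>\<theta>. G (vector[t,\<theta>])) differentiable (at \<theta>)"
        using L2[OF assms(2,3) smooth_has[OF G]] assms(2,3) real_differentiable_def mem_dom by blast
      then show "C1k 0 (\<lambda>\<theta>. G (vector[t,\<theta>]))" using diff_cont by simp
    qed
  next
    case (Suc k)
    show ?case
    proof (intro allI impI)
      fix G :: "real^2 \<Rightarrow> real" assume G: "smooth_on (CH2_dom T) G"
      have D: "DERIV (\<lambda>\<theta>. G (vector[t,\<theta>])) \<theta> :> partial (CH2_dom T) 2 G (vector[t,\<theta>])" for \<theta>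
        using L2[OF assms(2,3) smooth_has[OF G]] assms(2,3) mem_dom by blast
      then have "deriv (\<lambda>\<theta>. G (vector[t,\<theta>])) = (\<lambda>\<theta>. partial (CH2_dom T) 2 G (vector[t,\<theta>]))"
        by (intro ext DERIV_imp_deriv)
      then show "C1k (Suc k) (\<lambda>\<theta>. G (vector[t,\<theta>]))"
        using Suc smooth_partial[OF G] D real_differentiable_def by auto
    qed
  qed
  then show ?thesis unfolding smooth1_def using assms(1) by blast
qed

lemma Ck_sep: "C1k k a \<Longrightarrow> Ck k N_dom (\<lambda>y. c * (y$2)^n * a (y$1))"
proof (induction k arbitrary: c n a)
  case 0
  then show ?case using C1k_cont[OF 0]
    by (auto intro!: continuous_intros continuous_on_compose2[of UNIV a])
next
  case (Suc k)
  have cont: "continuous_on N_dom (\<lambda>y. c * (y$2)^n * a (y$1))"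
    using C1k_cont[OF Suc.prems]
    by (auto intro!: continuous_intros continuous_on_compose2[of UNIV a])
  have da: "DERIV a \<theta> :> deriv a \<theta>" for \<theta> using Suc.prems dd by simp
  have dq: "DERIV (\<lambda>r. c * r^n) r :> c * (real n * r^(n-1))" for r
    by (auto intro!: derivative_eq_intros)
  note ps = PN_sep[OF _ refl da dq]
  have hp: "\<forall>i. \<forall>y\<in>N_dom. has_partial N_dom i (\<lambda>y. c * (y$2)^n * a (y$1)) y"
    using ps(2) by blast
  have "Ck k N_dom (partial N_dom i (\<lambda>y. c * (y$2)^n * a (y$1)))" for i
  proof -
    consider "i = 1" | "i = 2" | "i \<noteq> 1 \<and> i \<noteq> 2" by blast
    then show ?thesis
    proof cases
      case 1
      have "Ck k N_dom (\<lambda>y. c * (y$2)^n * deriv a (y$1))" using Suc by simp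
      then show ?thesis by (subst Ck_cong[of N_dom _ "\<lambda>y. c * (y$2)^n * deriv a (y$1)"]) (auto simp: ps(1) 1)
    next
      case 2
      have "Ck k N_dom (\<lambda>y. (c * real n) * (y$2)^(n-1) * a (y$1))" using Suc C1k_mono by blast
      then show ?thesis by (subst Ck_cong[of N_dom _ "\<lambda>y. (c * real n) * (y$2)^(n-1) * a (y$1)"]) (auto simp: ps(1) 2)
    next
      case 3
      have "Ck k N_dom (\<lambda>y. 0 * (y$2)^0 * a (y$1))" using Suc C1k_mono by blast
      then show ?thesis by (subst Ck_cong[of N_dom _ "\<lambda>y. 0 * (y$2)^0 * a (y$1)"]) (auto simp: ps(1) 3)
    qed
  qed
  then show ?case using cont hp by simp
qed

lemma smooth_sep: "smooth1 a \<Longrightarrow> smooth_on N_dom (\<lambda>y. c * (y$2)^n * a (y$1))"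
  unfolding smooth1_def smooth_on_def using Ck_sep by blast

subsection \<open>Periodicity\<close>

definition per :: "real \<Rightarrow> (real^2 \<Rightarrow> real) \<Rightarrow> bool" where
  "per T G \<longleftrightarrow> (\<forall>t \<theta>. 0 \<le> t \<and> t < T \<longrightarrow> G (vector[t,\<theta>+2*pi]) = G (vector[t,\<theta>]))"

lemma per_partial2: "per T G \<Longrightarrow> per T (partial (CH2_dom T) 2 G)"
  unfolding per_def
proof (intro allI impI)
  fix t \<theta> assume P: "\<forall>t \<theta>. 0 \<le> t \<and> t < T \<longrightarrow> G (vector[t,\<theta>+2*pi]) = G (vector[t,\<theta>])"
    and t: "0 \<le> t \<and> t < T"
  show "partial (CH2_dom T) 2 G (vector[t,\<theta>+2*pi]) = partial (CH2_dom T) 2 G (vector[t,\<theta>])"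
  proof (rule partial_cong_gen(1))
    show "{s. vector[t,\<theta>+2*pi] + s *\<^sub>R axis 2 1 \<in> CH2_dom T} = {s. vector[t,\<theta>] + s *\<^sub>R axis 2 1 \<in> CH2_dom T}"
      by (simp add: vec2_line2 mem_dom)
    show "vector[t,\<theta>+2*pi] \<in> CH2_dom T" using t by (simp add: mem_dom)
    fix s
    have "G (vector[t,(\<theta>+s)+2*pi]) = G (vector[t,\<theta>+s])" using P t by blast
    then show "G (vector[t,\<theta>+2*pi] + s *\<^sub>R axis 2 1) = G (vector[t,\<theta>] + s *\<^sub>R axis 2 1)"
      unfolding vec2_line2 by (simp add: ac_simps)
  qed
qed

lemma per_partial1: "per T G \<Longrightarrow> per T (partial (CH2_dom T) 1 G)"
  unfolding per_def
proof (intro allI impI)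
  fix t \<theta> assume P: "\<forall>t \<theta>. 0 \<le> t \<and> t < T \<longrightarrow> G (vector[t,\<theta>+2*pi]) = G (vector[t,\<theta>])"
    and t: "0 \<le> t \<and> t < T"
  show "partial (CH2_dom T) 1 G (vector[t,\<theta>+2*pi]) = partial (CH2_dom T) 1 G (vector[t,\<theta>])"
  proof (rule partial_cong_gen(1))
    show "{s. vector[t,\<theta>+2*pi] + s *\<^sub>R axis 1 1 \<in> CH2_dom T} = {s. vector[t,\<theta>] + s *\<^sub>R axis 1 1 \<in> CH2_dom T}"
      by (simp add: vec2_line1 mem_dom)
    show "vector[t,\<theta>+2*pi] \<in> CH2_dom T" using t by (simp add: mem_dom)
    fix s assume "vector[t,\<theta>+2*pi] + s *\<^sub>R axis 1 1 \<in> CH2_dom T"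
    then have "0 \<le> t + s \<and> t + s < T" by (simp add: vec2_line1 mem_dom)
    then show "G (vector[t,\<theta>+2*pi] + s *\<^sub>R axis 1 1) = G (vector[t,\<theta>] + s *\<^sub>R axis 1 1)"
      using P by (simp add: vec2_line1)
  qed
qed

subsection \<open>Symmetry of mixed partials\<close>

lemma dist2: "dist (vector[a,b]::real^2) (vector[c,d]) \<le> \<bar>a-c\<bar> + \<bar>b-d\<bar>"
  using norm_le_l1_cart[of "vector[a,b] - (vector[c,d]::real^2)"] by (simp add: dist_norm sum_2)

lemma MVT_time:
  assumes "0 \<le> t" "0 < h" "t + h < T"
    and D: "\<And>s. t \<le> s \<Longrightarrow> s \<le> t + h \<Longrightarrow> (g has_real_derivative g' s) (at s within {0..<T})"
  shows "\<exists>z. t < z \<and> z < t + h \<and> g (t + h) - g t = h * g' z"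
proof -
  have "continuous_on {t..t+h} g"
    unfolding continuous_on_eq_continuous_within
  proof
    fix s assume "s \<in> {t..t+h}"
    then have "continuous (at s within {0..<T}) g" by (intro DERIV_continuous[OF D]) auto
    moreover have "{t..t+h} \<subseteq> {0..<T}" using assms by auto
    ultimately show "continuous (at s within {t..t+h}) g" using continuous_within_subset by blast
  qed
  moreover have Di: "DERIV g s :> g' s" if "t < s" "s < t + h" for s
  proof -
    have "s \<in> interior {0..<T}" using that assms by simp
    then show ?thesis using D[of s] that at_within_interior by fastforce
  qed
  ultimately obtain l z where "t < z" "z < t + h" "DERIV g z :> l" "g (t+h) - g t = (t + h - t) * l"
    using MVT[of t "t+h" g] assms real_differentiable_def by force
  moreover have "l = g' z" using DERIV_unique Di calculation by blast
  ultimately show ?thesis by auto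
qed

lemma abs3: "\<bar>p - a\<bar> < \<bar>a - b\<bar> / 3 \<Longrightarrow> \<bar>p - b\<bar> < \<bar>a - b\<bar> / 3 \<Longrightarrow> False" for p a b :: real
  by (auto simp: abs_if split: if_split_asm)

lemma schwarz:
  assumes f: "smooth_on (CH2_dom T) f" and t: "0 \<le> t" "t < T"
  shows "partial (CH2_dom T) 2 (partial (CH2_dom T) 1 f) (vector[t,\<theta>])
       = partial (CH2_dom T) 1 (partial (CH2_dom T) 2 f) (vector[t,\<theta>])"
proof (rule ccontr)
  define D where "D = CH2_dom T"
  define f1 where "f1 = partial D 1 f"
  define f2 where "f2 = partial D 2 f"
  define D21 where "D21 = partial D 2 f1"
  define D12 where "D12 = partial D 1 f2"
  define x where "x = (vector[t,\<theta>] :: real^2)"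
  have sf: "smooth_on D f" using f D_def by simp
  have sf1: "smooth_on D f1" "smooth_on D f2" "smooth_on D D21" "smooth_on D D12"
    unfolding f1_def f2_def D21_def D12_def using smooth_partial sf by blast+
  assume "\<not> ?thesis"
  then have ne: "D21 x \<noteq> D12 x" unfolding D21_def D12_def f1_def f2_def x_def D_def .
  define e where "e = \<bar>D21 x - D12 x\<bar>"
  have e: "e > 0" using ne e_def by simp
  have xD: "x \<in> D" using t by (simp add: x_def D_def mem_dom)
  obtain d1 where d1: "d1 > 0" "\<And>y. y \<in> D \<Longrightarrow> dist y x < d1 \<Longrightarrow> dist (D21 y) (D21 x) < e/3"
    using smooth_cont[OF sf1(3)] xD e unfolding continuous_on_iff
    by (metis divide_pos_pos zero_less_numeral)
  obtain d2 where d2: "d2 > 0" "\<And>y. y \<in> D \<Longrightarrow> dist y x < d2 \<Longrightarrow> dist (D12 y) (D12 x) < e/3"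
    using smooth_cont[OF sf1(4)] xD e unfolding continuous_on_iff
    by (metis divide_pos_pos zero_less_numeral)
  define m where "m = min (min d1 d2) (T - t)"
  have m: "m > 0" "m \<le> d1" "m \<le> d2" "m \<le> T - t" using d1 d2 t by (auto simp: m_def)
  define h where "h = m / 3"
  have h: "h > 0" "t + h < T" "2*h < d1" "2*h < d2" using m by (auto simp: h_def)
  have Dm: "\<And>a b. vector[a,b] \<in> D \<longleftrightarrow> 0 \<le> a \<and> a < T" by (simp add: D_def mem_dom)
  have L1g: "\<And>g a b. smooth_on D g \<Longrightarrow> 0 \<le> a \<Longrightarrow> a < T \<Longrightarrow>
      ((\<lambda>s. g (vector[s,b])) has_real_derivative partial D 1 g (vector[a,b])) (at a within {0..<T})"
    unfolding D_def using L1 smooth_has mem_dom by blast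
  have L2g: "\<And>g a b. smooth_on D g \<Longrightarrow> 0 \<le> a \<Longrightarrow> a < T \<Longrightarrow>
      ((\<lambda>\<tau>. g (vector[a,\<tau>])) has_real_derivative partial D 2 g (vector[a,b])) (at b)"
    unfolding D_def using L2 smooth_has mem_dom by blast
  let ?\<Delta> = "f (vector[t+h,\<theta>+h]) - f (vector[t+h,\<theta>]) - f (vector[t,\<theta>+h]) + f (vector[t,\<theta>])"
  obtain z where z: "t < z" "z < t + h"
    "(f (vector[t+h,\<theta>+h]) - f (vector[t+h,\<theta>])) - (f (vector[t,\<theta>+h]) - f (vector[t,\<theta>]))
       = h * (f1 (vector[z,\<theta>+h]) - f1 (vector[z,\<theta>]))"
    using MVT_time[OF t(1) h(1) h(2), of "\<lambda>s. f (vector[s,\<theta>+h]) - f (vector[s,\<theta>])"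
        "\<lambda>s. f1 (vector[s,\<theta>+h]) - f1 (vector[s,\<theta>])"]
      L1g[OF sf] h t unfolding f1_def by (force intro!: DERIV_diff)
  obtain w where w: "\<theta> < w" "w < \<theta> + h"
    "f1 (vector[z,\<theta>+h]) - f1 (vector[z,\<theta>]) = h * D21 (vector[z,w])"
    using MVT2[of \<theta> "\<theta>+h" "\<lambda>\<tau>. f1 (vector[z,\<tau>])" "\<lambda>\<tau>. D21 (vector[z,\<tau>])"]
      L2g[OF sf1(1)] h z t unfolding D21_def by force
  obtain w' where w': "\<theta> < w'" "w' < \<theta> + h"
    "(f (vector[t+h,\<theta>+h]) - f (vector[t,\<theta>+h])) - (f (vector[t+h,\<theta>]) - f (vector[t,\<theta>]))
       = h * (f2 (vector[t+h,w']) - f2 (vector[t,w']))"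
    using MVT2[of \<theta> "\<theta>+h" "\<lambda>\<tau>. f (vector[t+h,\<tau>]) - f (vector[t,\<tau>])"
        "\<lambda>\<tau>. f2 (vector[t+h,\<tau>]) - f2 (vector[t,\<tau>])"]
      L2g[OF sf] h t unfolding f2_def by (force intro!: DERIV_diff)
  obtain z' where z': "t < z'" "z' < t + h"
    "f2 (vector[t+h,w']) - f2 (vector[t,w']) = h * D12 (vector[z',w'])"
    using MVT_time[OF t(1) h(1) h(2), of "\<lambda>s. f2 (vector[s,w'])" "\<lambda>s. D12 (vector[s,w'])"]
      L1g[OF sf1(2)] h t unfolding D12_def by force
  have "h * (h * D21 (vector[z,w])) = h * (h * D12 (vector[z',w']))"
    using z(3) w(3) w'(3) z'(3) by (simp add: algebra_simps)
  then have eq: "D21 (vector[z,w]) = D12 (vector[z',w'])" using h(1) by simp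
  have "dist (vector[z,w]) x \<le> \<bar>z - t\<bar> + \<bar>w - \<theta>\<bar>" unfolding x_def by (rule dist2)
  also have "\<dots> < d1" using z w h by auto
  finally have a1: "dist (D21 (vector[z,w])) (D21 x) < e/3" using d1(2) Dm z h t by auto
  have "dist (vector[z',w']) x \<le> \<bar>z' - t\<bar> + \<bar>w' - \<theta>\<bar>" unfolding x_def by (rule dist2)
  also have "\<dots> < d2" using z' w' h by auto
  finally have a2: "dist (D12 (vector[z',w'])) (D12 x) < e/3" using d2(2) Dm z' h t by auto
  show False using a1 a2 eq abs3 unfolding e_def dist_real_def by metis
qed


subsection \<open>The metric\<close>

definition hinv :: "real \<Rightarrow> real^4^4" where
  "hinv r = (\<chi> i j. if i = j then
       (if i = 1 then inverse (r^2) else if i = 2 then 1 else if i = 3 then inverse (r^2)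
        else r^10) else 0)"

lemma matrix_inv_eq:
  fixes A B :: "real^'n^'n"
  assumes "A ** B = mat 1" "B ** A = mat 1"
  shows "matrix_inv A = B"
proof -
  have "\<exists>A'. A ** A' = mat 1 \<and> A' ** A = mat 1" using assms by blast
  then have s: "A ** matrix_inv A = mat 1 \<and> matrix_inv A ** A = mat 1"
    unfolding matrix_inv_def by (rule someI_ex)
  have "matrix_inv A = matrix_inv A ** (A ** B)" using assms by (simp add: matrix_mul_rid)
  also have "\<dots> = (matrix_inv A ** A) ** B" by (simp add: matrix_mul_assoc)
  also have "\<dots> = B" using s by (simp add: matrix_mul_lid)
  finally show ?thesis .
qed

lemma minv: "x$2 \<noteq> 0 \<Longrightarrow> matrix_inv (h_metric x) = hinv (x$2)"
  by (rule matrix_inv_eq)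
     (simp_all add: h_metric_def hinv_def matrix_matrix_mult_def mat_def vec_eq_iff forall_4 sum_4)

lemma hinv_nth: "hinv r $ k $ l = (if k = l then
       (if k = 1 then inverse (r^2) else if k = 2 then 1 else if k = 3 then inverse (r^2)
        else r^10) else 0)"
  by (simp add: hinv_def)

lemma prod_4: "prod f (UNIV::4 set) = f 1 * f 2 * f 3 * f 4"
  unfolding UNIV_4 by (simp add: ac_simps)
lemma det_h: "det (h_metric y) = (y$2)^2 * (y$2)^2 * inverse ((y$2)^10)"
proof -
  have "det (h_metric y) = prod (\<lambda>i. h_metric y $ i $ i) UNIV"
    by (rule det_diagonal) (simp add: h_metric_def)
  also have "\<dots> = h_metric y $ 1 $ 1 * h_metric y $ 2 $ 2 * h_metric y $ 3 $ 3 * h_metric y $ 4 $ 4"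
    by (rule prod_4)
  also have "\<dots> = (y$2)^2 * 1 * (y$2)^2 * inverse ((y$2)^10)"
    by (simp add: h_metric_def)
  finally show ?thesis by simp
qed
lemma sqrt_det_h: "0 < y$2 \<Longrightarrow> sqrt (det (h_metric y)) = 1 / (y$2)^3"
proof -
  assume p: "0 < y$2"
  have e: "(y$2)^10 = (y$2)^2*(y$2)^2*((y$2)^3)^2" by (simp add: eval_nat_numeral)
  have "det (h_metric y) = (1 / (y$2)^3)^2" unfolding det_h using p e
    by (simp add: field_simps)
  then show ?thesis using p by simp
qed

definition mm :: "4 \<Rightarrow> 4 \<Rightarrow> real \<Rightarrow> real" where
  "mm j l r = (if j = l then (if j = 1 then r^2 else if j = 2 then 1 else if j = 3 then r^2
        else inverse (r^10)) else 0)"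
definition dmv :: "4 \<Rightarrow> 4 \<Rightarrow> real \<Rightarrow> real" where
  "dmv j l r = (if j = l then (if j = 1 then 2*r else if j = 2 then 0 else if j = 3 then 2*r
        else -10 / r^11) else 0)"

lemma DERIV_inv10: "(0::real) < r \<Longrightarrow> DERIV (\<lambda>r. inverse (r^10)) r :> -10/r^11"
proof -
  assume r: "0 < r"
  have d: "DERIV (\<lambda>r. inverse (r^10)) r :> - (real 10 * r^(10 - Suc 0) * inverse ((r^10)^Suc (Suc 0)))"
    by (rule DERIV_inverse_fun[OF DERIV_pow]) (use r in simp)
  have e: "(r^10)^Suc (Suc 0) = r^9 * r^11" by (simp flip: power_add power_mult)
  have "- (real 10 * r^(10 - Suc 0) * inverse ((r^10)^Suc (Suc 0))) = -10/r^11"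
    unfolding e using r by (simp add: field_simps)
  then show ?thesis using d by simp
qed
lemma DERIV_mm: "0 < r \<Longrightarrow> DERIV (mm j l) r :> dmv j l r"
proof -
  assume r: "0 < r"
  consider "j \<noteq> l" | "j = l" "j = 1" | "j = l" "j = 2" | "j = l" "j = 3" | "j = l" "j = 4"
    using exhaust_4 by blast
  then show ?thesis
  proof cases
    case 1
    then have "mm j l = (\<lambda>r. 0)" "dmv j l r = 0" by (auto simp: mm_def dmv_def)
    then show ?thesis by simp
  next
    case 2
    then have "mm j l = (\<lambda>r. r^2)" "dmv j l r = 2*r" by (auto simp: mm_def dmv_def)
    then show ?thesis by (auto intro!: derivative_eq_intros)
  next
    case 3
    then have "mm j l = (\<lambda>r. 1)" "dmv j l r = 0" by (auto simp: mm_def dmv_def)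
    then show ?thesis by simp
  next
    case 4
    then have "mm j l = (\<lambda>r. r^2)" "dmv j l r = 2*r" by (auto simp: mm_def dmv_def)
    then show ?thesis by (auto intro!: derivative_eq_intros)
  next
    case 5
    then have "mm j l = (\<lambda>r. inverse (r^10))" "dmv j l r = -10/r^11" by (auto simp: mm_def dmv_def)
    then show ?thesis using DERIV_inv10[OF r] by simp
  qed
qed

lemma dpart: "x \<in> N_dom \<Longrightarrow> partial N_dom i (\<lambda>y. h_metric y $ j $ l) x = (if i = 2 then dmv j l (x$2) else 0)"
proof -
  assume x: "x \<in> N_dom"
  have "partial N_dom i (\<lambda>y. h_metric y $ j $ l) x
     = (if i = 1 then mm j l (x$2) * 0 else if i = 2 then dmv j l (x$2) * 1 else 0)"
    by (rule PN_sep(1)[OF x _ DERIV_const DERIV_mm]) (use x in \<open>auto simp: h_metric_def mm_def N_dom_def\<close>)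
  then show ?thesis by simp
qed


lemma chr:
  assumes x: "x \<in> N_dom"
  shows "christoffel N_dom h_metric x k i j = (1/2) * hinv (x$2) $ k $ k *
     ((if i = 2 then dmv j k (x$2) else 0) + (if j = 2 then dmv i k (x$2) else 0) - (if k = 2 then dmv i j (x$2) else 0))"
proof -
  have r: "x$2 \<noteq> 0" using x by (simp add: N_dom_def)
  have e: "\<And>l. hinv (x$2) $ k $ l * ((if i = 2 then dmv j l (x$2) else 0) + (if j = 2 then dmv i l (x$2) else 0) - (if l = 2 then dmv i j (x$2) else 0))
     = (if k = l then hinv (x$2) $ k $ k * ((if i = 2 then dmv j l (x$2) else 0) + (if j = 2 then dmv i l (x$2) else 0) - (if l = 2 then dmv i j (x$2) else 0)) else 0)"
    by (simp add: hinv_nth)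
  show ?thesis
    unfolding christoffel_def minv[OF r] dpart[OF x] e by (simp add: sum.delta)
qed

lemma chr_sums:
  assumes x: "x \<in> N_dom" and w4: "w$4 = 0"
  shows
   "(\<Sum>i\<in>UNIV. \<Sum>j\<in>UNIV. christoffel N_dom h_metric x 1 i j * w$i * w$j) = 2 * w$1 * w$2 / x$2"
   "(\<Sum>i\<in>UNIV. \<Sum>j\<in>UNIV. christoffel N_dom h_metric x 2 i j * w$i * w$j) = - x$2 * (w$1)^2 - x$2 * (w$3)^2"
   "(\<Sum>i\<in>UNIV. \<Sum>j\<in>UNIV. christoffel N_dom h_metric x 3 i j * w$i * w$j) = 2 * w$2 * w$3 / x$2"
   "(\<Sum>i\<in>UNIV. \<Sum>j\<in>UNIV. christoffel N_dom h_metric x 4 i j * w$i * w$j) = 0"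
proof -
  have r: "0 < x$2" using x by (simp add: N_dom_def)
  note simps = chr[OF x] hinv_nth dmv_def sum_4 w4
  show "(\<Sum>i\<in>UNIV. \<Sum>j\<in>UNIV. christoffel N_dom h_metric x 1 i j * w$i * w$j) = 2 * w$1 * w$2 / x$2"
    using r by (simp add: simps field_simps power2_eq_square)
  show "(\<Sum>i\<in>UNIV. \<Sum>j\<in>UNIV. christoffel N_dom h_metric x 2 i j * w$i * w$j) = - x$2 * (w$1)^2 - x$2 * (w$3)^2"
    using r by (simp add: simps field_simps power2_eq_square)
  show "(\<Sum>i\<in>UNIV. \<Sum>j\<in>UNIV. christoffel N_dom h_metric x 3 i j * w$i * w$j) = 2 * w$2 * w$3 / x$2"
    using r by (simp add: simps field_simps power2_eq_square)
  show "(\<Sum>i\<in>UNIV. \<Sum>j\<in>UNIV. christoffel N_dom h_metric x 4 i j * w$i * w$j) = 0"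
    using r by (simp add: simps)
qed


lemma DERIV_q2: "(0::real) < r \<Longrightarrow> DERIV (\<lambda>r. inverse (r^2) / 2) r :> - inverse (r^3)"
proof -
  assume r: "0 < r"
  have d: "DERIV (\<lambda>r. inverse (r^2)) r :> - (real 2 * r^(2 - Suc 0) * inverse ((r^2)^Suc (Suc 0)))"
    by (rule DERIV_inverse_fun[OF DERIV_pow]) (use r in simp)
  have e: "(r^2)^Suc (Suc 0) = r * r^3" by (simp add: eval_nat_numeral)
  have "- (real 2 * r^(2 - Suc 0) * inverse ((r^2)^Suc (Suc 0))) / 2 = - inverse (r^3)"
    unfolding e using r by (simp add: field_simps)
  then show ?thesis using DERIV_cdivide[OF d, of 2] by simp
qed

lemma DERIV_q3: "(0::real) < r \<Longrightarrow> DERIV (\<lambda>r. inverse (r^3)) r :> - (real 3 * r^(3 - Suc 0) * inverse ((r^3)^Suc (Suc 0)))"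
  by (rule DERIV_inverse_fun[OF DERIV_pow]) simp

theorem corollary4p2:
  fixes T :: real and u \<rho> :: "real \<Rightarrow> real \<Rightarrow> real"
  assumes "CH2_solution T u \<rho>"
  shows "\<exists>p :: real \<Rightarrow> real^4 \<Rightarrow> real.
     (\<forall>t\<in>{0..<T}. smooth_on N_dom (p t) \<and> N_periodic (p t)) \<and>
     (\<forall>t\<in>{0..<T}. \<forall>x\<in>N_dom. \<forall>k.
        ((\<lambda>s. CH2_lift T u \<rho> s x $ k) has_real_derivative
            (- cov_deriv N_dom h_metric (CH2_lift T u \<rho> t) (CH2_lift T u \<rho> t) x $ k
             - grad N_dom h_metric (p t) x $ k)) (at t within {0..<T})) \<and>
     (\<forall>t\<in>{0..<T}. \<forall>x\<in>N_dom. divg N_dom h_metric (CH2_lift T u \<rho> t) x = 0)"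
proof -
  define D where "D = CH2_dom T"
  define U where "U = (\<lambda>x::real^2. u (x$1) (x$2))"
  define R where "R = (\<lambda>x::real^2. \<rho> (x$1) (x$2))"
  have sU: "smooth_on D U" and sR: "smooth_on D R"
    and perio: "\<forall>t \<theta>. 0 \<le> t \<and> t < T \<longrightarrow> u t (\<theta> + 2*pi) = u t \<theta> \<and> \<rho> t (\<theta> + 2*pi) = \<rho> t \<theta>"
    and ch: "\<forall>x\<in>D. partial D 1 (\<lambda>x. U x - 1/4 * partial D 2 (partial D 2 U) x) x
              + U x * partial D 2 (\<lambda>x. U x - 1/4 * partial D 2 (partial D 2 U) x) x
              + 2 * (U x - 1/4 * partial D 2 (partial D 2 U) x) * partial D 2 U x
              = - R x * partial D 2 R x"
    and mass: "\<forall>x\<in>D. partial D 1 R x + partial D 2 (\<lambda>y. R y * U y) x = 0"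
    using assms unfolding CH2_solution_def Let_def D_def U_def R_def by simp_all
  define U1 where "U1 = partial D 1 U"
  define U2 where "U2 = partial D 2 U"
  define U21 where "U21 = partial D 1 U2"
  define U22 where "U22 = partial D 2 U2"
  define U212 where "U212 = partial D 2 U21"
  define U222 where "U222 = partial D 2 U22"
  define U221 where "U221 = partial D 1 U22"
  define R1 where "R1 = partial D 1 R"
  define R2 where "R2 = partial D 2 R"
  have sm: "smooth_on D U2" "smooth_on D U21" "smooth_on D U22" "smooth_on D U212" "smooth_on D U222" "smooth_on D U221"
    "smooth_on D U1" "smooth_on D R1" "smooth_on D R2"
    unfolding U1_def U2_def U21_def U22_def U212_def U222_def U221_def R1_def R2_def
    using smooth_partial sU sR by blast+
  define a where "a = (\<lambda>t \<theta>. U21 (vector[t,\<theta>]) + U (vector[t,\<theta>]) * U22 (vector[t,\<theta>])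
      + 1/2 * (U2 (vector[t,\<theta>]) * U2 (vector[t,\<theta>])) + (-2) * (U (vector[t,\<theta>]) * U (vector[t,\<theta>]))
      + (-2) * (R (vector[t,\<theta>]) * R (vector[t,\<theta>])))"
  define p where "p = (\<lambda>t (y::real^4). (-1/4) * (y$2)^2 * a t (y$1))"
  have W1: "CH2_lift T u \<rho> s y $ 1 = U (vector[s,y$1])" for s y
    unfolding CH2_lift_def U_def by simp
  have W2: "CH2_lift T u \<rho> s y $ 2 = y$2/2 * U2 (vector[s,y$1])" for s y
    unfolding CH2_lift_def U_def U2_def D_def by simp
  have W3: "CH2_lift T u \<rho> s y $ 3 = R (vector[s,y$1])" for s y
    unfolding CH2_lift_def R_def by simp
  have W4: "CH2_lift T u \<rho> s y $ 4 = 0" for s y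
    unfolding CH2_lift_def by simp
  have part1: "smooth_on N_dom (p t) \<and> N_periodic (p t)" if t: "t \<in> {0..<T}" for t
  proof
    have "smooth1 (a t)" unfolding a_def
      using t sU sR sm unfolding D_def
      by (intro smooth1_add smooth1_mult smooth1_const smooth1_slice) auto
    then show "smooth_on N_dom (p t)" unfolding p_def by (rule smooth_sep)
    have perU: "per T U" "per T R" using perio unfolding per_def U_def R_def by simp_all
    have perU2: "per T U2" "per T U21" "per T U22"
      unfolding U2_def U21_def U22_def D_def using perU per_partial1 per_partial2 by blast+
    have pa: "a t (\<theta> + 2*pi) = a t \<theta>" for \<theta>
      using perU perU2 t unfolding a_def per_def by simp
    show "N_periodic (p t)" unfolding N_periodic_def p_def
      by (simp add: axis_def pa)
  qed

  have part2: "((\<lambda>s. CH2_lift T u \<rho> s x $ k) has_real_derivative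
            (- cov_deriv N_dom h_metric (CH2_lift T u \<rho> t) (CH2_lift T u \<rho> t) x $ k
             - grad N_dom h_metric (p t) x $ k)) (at t within {0..<T})"
    if t: "t \<in> {0..<T}" and x: "x \<in> N_dom" for t x k
  proof -
    let ?v = "vector[t, x$1] :: real^2"
    let ?r = "x$2"
    have t0: "0 \<le> t" "t < T" using t by auto
    have r0: "0 < ?r" using x by (simp add: N_dom_def)
    have vD: "?v \<in> D" unfolding D_def using t0 by (simp add: mem_dom)
    have sl2: "\<And>G \<tau>. smooth_on D G \<Longrightarrow> DERIV (\<lambda>\<tau>'. G (vector[t,\<tau>'])) \<tau> :> partial D 2 G (vector[t,\<tau>])"
      unfolding D_def using L2 smooth_has mem_dom t0 by blast
    have sl1: "\<And>G. smooth_on D G \<Longrightarrow> ((\<lambda>s. G (vector[s,x$1])) has_real_derivative partial D 1 G ?v) (at t within {0..<T})"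
      unfolding D_def using L1 smooth_has mem_dom t0 by blast
    have dU: "DERIV (\<lambda>\<tau>. U (vector[t,\<tau>])) (x$1) :> U2 ?v" using sl2[OF sU] unfolding U2_def .
    have dU2: "DERIV (\<lambda>\<tau>. U2 (vector[t,\<tau>])) (x$1) :> U22 ?v" using sl2[OF sm(1)] unfolding U22_def .
    have dU21: "DERIV (\<lambda>\<tau>. U21 (vector[t,\<tau>])) (x$1) :> U212 ?v" using sl2[OF sm(2)] unfolding U212_def .
    have dU22: "DERIV (\<lambda>\<tau>. U22 (vector[t,\<tau>])) (x$1) :> U222 ?v" using sl2[OF sm(3)] unfolding U222_def .
    have dR: "DERIV (\<lambda>\<tau>. R (vector[t,\<tau>])) (x$1) :> R2 ?v" using sl2[OF sR] unfolding R2_def .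
    have Meq: "(\<lambda>x. U x - 1/4 * partial D 2 (partial D 2 U) x) = (\<lambda>x. U x - 1/4 * U22 x)"
      unfolding U22_def U2_def ..
    have d1: "((\<lambda>s. U (vector[s,x$1]) - 1/4 * U22 (vector[s,x$1])) has_real_derivative U1 ?v - 1/4 * U221 ?v) (at t within {0..<T})"
      using DERIV_diff[OF sl1[OF sU] DERIV_cmult[OF sl1[OF sm(3)]]] unfolding U1_def U221_def .
    have pM1: "partial D 1 (\<lambda>x. U x - 1/4 * U22 x) ?v = U1 ?v - 1/4 * U221 ?v"
      using P1(1)[OF t0 d1] unfolding D_def .
    have d2: "DERIV (\<lambda>\<tau>. U (vector[t,\<tau>]) - 1/4 * U22 (vector[t,\<tau>])) (x$1) :> U2 ?v - 1/4 * U222 ?v"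
      by (rule DERIV_diff[OF dU DERIV_cmult[OF dU22]])
    have pM2: "partial D 2 (\<lambda>x. U x - 1/4 * U22 x) ?v = U2 ?v - 1/4 * U222 ?v"
      using P2(1)[OF t0 d2] unfolding D_def .
    have d3: "DERIV (\<lambda>\<tau>. R (vector[t,\<tau>]) * U (vector[t,\<tau>])) (x$1) :> R2 ?v * U ?v + U2 ?v * R ?v"
      by (rule DERIV_mult[OF dR dU])
    have pRU: "partial D 2 (\<lambda>y. R y * U y) ?v = R2 ?v * U ?v + U2 ?v * R ?v"
      using P2(1)[OF t0 d3] unfolding D_def .
    have sch: "U212 ?v = U221 ?v"
      using schwarz[OF sm(1)[unfolded D_def] t0] unfolding U212_def U221_def U21_def U22_def D_def .
    have chv: "U1 ?v - 1/4 * U221 ?v + U ?v * (U2 ?v - 1/4 * U222 ?v) + 2 * (U ?v - 1/4 * U22 ?v) * U2 ?v = - R ?v * R2 ?v"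
    proof -
      have ch': "\<forall>x\<in>D. partial D 1 (\<lambda>x. U x - 1/4 * U22 x) x + U x * partial D 2 (\<lambda>x. U x - 1/4 * U22 x) x
          + 2 * (U x - 1/4 * U22 x) * U2 x = - R x * R2 x"
        using ch unfolding U22_def U2_def R2_def .
      show ?thesis using bspec[OF ch' vD] unfolding pM1 pM2 .
    qed
    have massv: "R1 ?v + (R2 ?v * U ?v + U2 ?v * R ?v) = 0"
      using mass vD unfolding R1_def[symmetric] pRU[symmetric] by simp
    define A' where "A' = U212 ?v + (U2 ?v * U22 ?v + U222 ?v * U ?v) + 1/2 * (U22 ?v * U2 ?v + U22 ?v * U2 ?v)
        + -2 * (U2 ?v * U ?v + U2 ?v * U ?v) + -2 * (R2 ?v * R ?v + R2 ?v * R ?v)"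
    have dA: "DERIV (a t) (x$1) :> A'"
      unfolding a_def A'_def
      by (rule DERIV_add | rule DERIV_cmult | rule DERIV_mult | rule dU dU2 dU21 dU22 dR)+
    have A'eq: "A' = 4 * U1 ?v + 8 * U ?v * U2 ?v" unfolding A'_def using chv sch by algebra
    have dq: "DERIV (\<lambda>r. (-1/4) * r^2) (x$2) :> (-1/4) * (2 * x$2)"
      using DERIV_cmult[OF DERIV_pow[of 2 "x$2" UNIV], of "-1/4"] by simp
    have pp: "partial N_dom l (p t) x = (if l = 1 then ((-1/4) * (x$2)^2) * A' else if l = 2 then ((-1/4) * (2 * x$2)) * a t (x$1) else 0)" for l
      by (rule PN_sep(1)[OF x _ dA dq]) (simp add: p_def)
    have gk: "grad N_dom h_metric (p t) x $ k = (\<Sum>j\<in>UNIV. hinv ?r $ k $ j * partial N_dom j (p t) x)" for k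
      using r0 by (simp add: grad_def minv matrix_vector_mult_def)
    have gr: "grad N_dom h_metric (p t) x $ 1 = inverse (?r^2) * (((-1/4) * (x$2)^2) * A')"
       "grad N_dom h_metric (p t) x $ 2 = ((-1/4) * (2 * x$2)) * a t (x$1)"
       "grad N_dom h_metric (p t) x $ 3 = 0"
       "grad N_dom h_metric (p t) x $ 4 = 0"
      by (simp_all add: gk sum_4 hinv_nth pp)
    define wv where "wv = CH2_lift T u \<rho> t x"
    have wv: "wv$1 = U ?v" "wv$2 = x$2/2 * U2 ?v" "wv$3 = R ?v" "wv$4 = 0"
      unfolding wv_def by (simp_all add: W1 W2 W3 W4)
    have ck: "cov_deriv N_dom h_metric (CH2_lift T u \<rho> t) (CH2_lift T u \<rho> t) x $ k
       = (\<Sum>i\<in>UNIV. wv$i * partial N_dom i (\<lambda>y. CH2_lift T u \<rho> t y $ k) x)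
         + (\<Sum>i\<in>UNIV. \<Sum>j\<in>UNIV. christoffel N_dom h_metric x k i j * wv$i * wv$j)" for k
      unfolding cov_deriv_def wv_def by simp
    note cs = chr_sums[OF x wv(4)]
    have dc: "DERIV (\<lambda>r. 1) (x$2) :> 0" by simp
    have dl: "DERIV (\<lambda>r. r/2) (x$2) :> 1/2" by (auto intro!: derivative_eq_intros)
    have pk1: "partial N_dom i (\<lambda>y. CH2_lift T u \<rho> t y $ 1) x = (if i = 1 then 1 * U2 ?v else if i = 2 then 0 * U ?v else 0)" for i
      by (rule PN_sep(1)[OF x _ dU dc]) (simp add: W1)
    have pk2: "partial N_dom i (\<lambda>y. CH2_lift T u \<rho> t y $ 2) x = (if i = 1 then x$2/2 * U22 ?v else if i = 2 then 1/2 * U2 ?v else 0)" for i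
      by (rule PN_sep(1)[OF x _ dU2 dl]) (simp add: W2)
    have pk3: "partial N_dom i (\<lambda>y. CH2_lift T u \<rho> t y $ 3) x = (if i = 1 then 1 * R2 ?v else if i = 2 then 0 * R ?v else 0)" for i
      by (rule PN_sep(1)[OF x _ dR dc]) (simp add: W3)
    have pk4: "partial N_dom i (\<lambda>y. CH2_lift T u \<rho> t y $ 4) x = (if i = 1 then 1 * 0 else if i = 2 then 0 * 0 else 0)" for i
      by (rule PN_sep(1)[OF x _ DERIV_const dc]) (simp add: W4)
    have cov: "cov_deriv N_dom h_metric (CH2_lift T u \<rho> t) (CH2_lift T u \<rho> t) x $ 1 = U ?v * U2 ?v + 2 * wv$1 * wv$2 / x$2"
      "cov_deriv N_dom h_metric (CH2_lift T u \<rho> t) (CH2_lift T u \<rho> t) x $ 2 = U ?v * (x$2/2 * U22 ?v) + wv$2 * (1/2 * U2 ?v) + (- x$2 * (wv$1)^2 - x$2 * (wv$3)^2)"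
      "cov_deriv N_dom h_metric (CH2_lift T u \<rho> t) (CH2_lift T u \<rho> t) x $ 3 = U ?v * R2 ?v + 2 * wv$2 * wv$3 / x$2"
      "cov_deriv N_dom h_metric (CH2_lift T u \<rho> t) (CH2_lift T u \<rho> t) x $ 4 = 0"
      unfolding ck cs by (simp_all add: sum_4 pk1 pk2 pk3 pk4 wv)
    have td: "((\<lambda>s. CH2_lift T u \<rho> s x $ 1) has_real_derivative U1 ?v) (at t within {0..<T})"
       "((\<lambda>s. CH2_lift T u \<rho> s x $ 2) has_real_derivative x$2/2 * U21 ?v) (at t within {0..<T})"
       "((\<lambda>s. CH2_lift T u \<rho> s x $ 3) has_real_derivative R1 ?v) (at t within {0..<T})"
       "((\<lambda>s. CH2_lift T u \<rho> s x $ 4) has_real_derivative 0) (at t within {0..<T})"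
      unfolding W1 W2 W3 W4 U1_def U21_def R1_def
      by (rule sl1[OF sU], rule DERIV_cmult[OF sl1[OF sm(1)]], rule sl1[OF sR], rule DERIV_const)
    consider "k = 1" | "k = 2" | "k = 3" | "k = 4" using exhaust_4 by blast
    then show ?thesis
    proof cases
      case 1
      have "U1 ?v = - (U ?v * U2 ?v + 2 * wv$1 * wv$2 / x$2) - inverse (?r^2) * (((-1/4) * (x$2)^2) * A')"
        using r0 unfolding A'eq wv by (simp add: field_simps power2_eq_square)
      then have "- cov_deriv N_dom h_metric (CH2_lift T u \<rho> t) (CH2_lift T u \<rho> t) x $ 1 - grad N_dom h_metric (p t) x $ 1 = U1 ?v"
        unfolding cov(1) gr(1) by simp
      note e = this
      show ?thesis unfolding 1 e by (rule td(1))
    next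
      case 2
      have "x$2/2 * U21 ?v = - (U ?v * (x$2/2 * U22 ?v) + wv$2 * (1/2 * U2 ?v) + (- x$2 * (wv$1)^2 - x$2 * (wv$3)^2))
          - ((-1/4) * (2 * x$2)) * a t (x$1)"
        unfolding wv a_def by (simp add: algebra_simps power2_eq_square)
      then have "- cov_deriv N_dom h_metric (CH2_lift T u \<rho> t) (CH2_lift T u \<rho> t) x $ 2 - grad N_dom h_metric (p t) x $ 2 = x$2/2 * U21 ?v"
        unfolding cov(2) gr(2) by simp
      note e = this
      show ?thesis unfolding 2 e by (rule td(2))
    next
      case 3
      have "R1 ?v = - (U ?v * R2 ?v + 2 * wv$2 * wv$3 / x$2) - 0"
        using r0 massv unfolding wv by (simp add: field_simps)
      then have "- cov_deriv N_dom h_metric (CH2_lift T u \<rho> t) (CH2_lift T u \<rho> t) x $ 3 - grad N_dom h_metric (p t) x $ 3 = R1 ?v"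
        unfolding cov(3) gr(3) by simp
      note e = this
      show ?thesis unfolding 3 e by (rule td(3))
    next
      case 4
      then show ?thesis using td(4) cov(4) gr(4) by simp
    qed
  qed

  have part3: "divg N_dom h_metric (CH2_lift T u \<rho> t) x = 0" if t: "t \<in> {0..<T}" and x: "x \<in> N_dom" for t x
  proof -
    let ?v = "vector[t, x$1] :: real^2"
    have t0: "0 \<le> t" "t < T" using t by auto
    have r0: "0 < x$2" using x by (simp add: N_dom_def)
    have sl2: "\<And>G \<tau>. smooth_on D G \<Longrightarrow> DERIV (\<lambda>\<tau>'. G (vector[t,\<tau>'])) \<tau> :> partial D 2 G (vector[t,\<tau>])"
      unfolding D_def using L2 smooth_has mem_dom t0 by blast
    have dU: "DERIV (\<lambda>\<tau>. U (vector[t,\<tau>])) (x$1) :> U2 ?v" using sl2[OF sU] unfolding U2_def .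
    have dU2: "DERIV (\<lambda>\<tau>. U2 (vector[t,\<tau>])) (x$1) :> U22 ?v" using sl2[OF sm(1)] unfolding U22_def .
    have dR: "DERIV (\<lambda>\<tau>. R (vector[t,\<tau>])) (x$1) :> R2 ?v" using sl2[OF sR] unfolding R2_def .
    have sd: "y \<in> N_dom \<Longrightarrow> sqrt (det (h_metric y)) = inverse ((y$2)^3)" for y
      using sqrt_det_h[of y] by (simp add: N_dom_def inverse_eq_divide)
    note q3 = DERIV_q3[OF r0]
    have p1: "partial N_dom 1 (\<lambda>y. sqrt (det (h_metric y)) * CH2_lift T u \<rho> t y $ 1) x = inverse ((x$2)^3) * U2 ?v"
      using PN_sep(1)[OF x _ dU q3, of "\<lambda>y. sqrt (det (h_metric y)) * CH2_lift T u \<rho> t y $ 1" 1]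
      by (simp add: sd W1)
    have p2: "partial N_dom 2 (\<lambda>y. sqrt (det (h_metric y)) * CH2_lift T u \<rho> t y $ 2) x = - inverse ((x$2)^3) * U2 ?v"
    proof -
      have "\<And>y. y \<in> N_dom \<Longrightarrow> sqrt (det (h_metric y)) * CH2_lift T u \<rho> t y $ 2 = inverse ((y$2)^2) / 2 * U2 (vector[t, y$1])"
        by (simp add: sd W2 N_dom_def field_simps power2_eq_square eval_nat_numeral)
      then show ?thesis using PN_sep(1)[OF x _ dU2 DERIV_q2[OF r0], of "\<lambda>y. sqrt (det (h_metric y)) * CH2_lift T u \<rho> t y $ 2" 2]
        by simp
    qed
    have p3: "partial N_dom 3 (\<lambda>y. sqrt (det (h_metric y)) * CH2_lift T u \<rho> t y $ 3) x = 0"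
      using PN_sep(1)[OF x _ dR q3, of "\<lambda>y. sqrt (det (h_metric y)) * CH2_lift T u \<rho> t y $ 3" 3]
      by (simp add: sd W3)
    have p4: "partial N_dom 4 (\<lambda>y. sqrt (det (h_metric y)) * CH2_lift T u \<rho> t y $ 4) x = 0"
      using PN_sep(1)[OF x _ dR DERIV_const, of "\<lambda>y. sqrt (det (h_metric y)) * CH2_lift T u \<rho> t y $ 4" 0 4]
      by (simp add: W4)
    show ?thesis unfolding divg_def sum_4 p1 p2 p3 p4 by simp
  qed
  show ?thesis
    by (rule exI[of _ p]) (use part1 part2 part3 in blast)
qed
end
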